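(* For any continuous map $T:X\to X$ of a compact metric space $X$, the set $Per(T)$ of periodic points is either empty or satisfies $h_{top}(T,Per(T))=0$.
   Context: $h_{top}(T,Z)$ denotes Bowen's topological entropy of an arbitrary subset $Z\subseteq X$: with $B_m(x,\varepsilon)=\{y:d(T^jx,T^jy)\le\varepsilon,0\le j<m\}$, $C(Z;t,n,\varepsilon)=\inf\sum_i2^{-tm_i}$ over countable covers of $Z$ by $B_{m_i}(x_i,\varepsilon)$ with $m_i\ge n$, $h(Z,\varepsilon)=\inf\{t:\lim_nC(Z;t,n,\varepsilon)=0\}$, $h_{top}(T,Z)=\lim_{\varepsilon\to0}h(Z,\varepsilon)$. *)

theory Defs
  imports "HOL-Analysis.Analysis"
begin

definition bowen_ball :: "('a::metric_space \<Rightarrow> 'a) \<Rightarrow> 'a set \<Rightarrow> nat \<Rightarrow> 'a \<Rightarrow> real \<Rightarrow> 'a set" where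
  "bowen_ball T X m x \<epsilon> = {y \<in> X. \<forall>j<m. dist ((T ^^ j) x) ((T ^^ j) y) \<le> \<epsilon>}"

definition bowen_C :: "('a::metric_space \<Rightarrow> 'a) \<Rightarrow> 'a set \<Rightarrow> 'a set \<Rightarrow> real \<Rightarrow> nat \<Rightarrow> real \<Rightarrow> ennreal" where
  "bowen_C T X Z t n \<epsilon> =
     (INF c \<in> {(I, xs, ms). (I::nat set) \<subseteq> UNIV \<and> (\<forall>i\<in>I. xs i \<in> X \<and> ms i \<ge> n)
                         \<and> Z \<subseteq> (\<Union>i\<in>I. bowen_ball T X (ms i) (xs i) \<epsilon>)}.
        case c of (I, xs, ms) \<Rightarrow>
          (\<Sum>i. if i \<in> I then ennreal (2 powr (- t * real (ms i))) else 0))"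

definition bowen_h :: "('a::metric_space \<Rightarrow> 'a) \<Rightarrow> 'a set \<Rightarrow> 'a set \<Rightarrow> real \<Rightarrow> ereal" where
  "bowen_h T X Z \<epsilon> = Inf {ereal t | t. (\<lambda>n. bowen_C T X Z t n \<epsilon>) \<longlonglongrightarrow> 0}"

definition htop :: "('a::metric_space \<Rightarrow> 'a) \<Rightarrow> 'a set \<Rightarrow> 'a set \<Rightarrow> ereal" where
  "htop T X Z = Lim (at_right 0) (\<lambda>\<epsilon>. bowen_h T X Z \<epsilon>)"

definition periodic_points :: "('a \<Rightarrow> 'a) \<Rightarrow> 'a set \<Rightarrow> 'a set" where
  "periodic_points T X = {x \<in> X. \<exists>n>0. (T ^^ n) x = x}"

end

theory Submission
  imports Defs
begin

lemma funpow_period: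
  assumes "(T ^^ k) x = x"
  shows "(T ^^ (q * k)) x = x"
proof (induction q)
  case 0 then show ?case by simp
next
  case (Suc q)
  have "Suc q * k = q*k + k" by simp
  then have "(T ^^ (Suc q * k)) x = (T ^^ (q*k)) ((T ^^ k) x)"
    by (simp only: funpow_add comp_apply)
  then show ?case using assms Suc by simp
qed

lemma funpow_mod:
  assumes "(T ^^ k) x = x"
  shows "(T ^^ j) x = (T ^^ (j mod k)) x"
proof -
  have "j = j mod k + (j div k) * k" by simp
  then have "(T ^^ j) x = (T ^^ (j mod k)) ((T ^^ ((j div k) * k)) x)"
    by (metis comp_apply funpow_add)
  then show ?thesis using funpow_period[OF assms] by simp
qed

lemma funpow_cont:
  assumes "continuous_on X T" "T ` X \<subseteq> X"
  shows "continuous_on X (T ^^ j) \<and> (T ^^ j) ` X \<subseteq> X"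
proof (induction j)
  case 0 then show ?case by (simp add: continuous_on_id)
next
  case (Suc j)
  then show ?case using assms
    by (auto simp: funpow_Suc_right intro: continuous_on_compose2[of X T X "T ^^ j"])
qed

lemma fix_cover:
  fixes T :: "'a::metric_space \<Rightarrow> 'a" and X :: "'a set"
  assumes "compact X" and "continuous_on X T" and "T ` X \<subseteq> X" and "\<epsilon> > 0"
  shows "\<exists>F. finite F \<and> F \<subseteq> {x\<in>X. (T ^^ Suc k) x = x} \<and>
     (\<forall>y\<in>{x\<in>X. (T ^^ Suc k) x = x}. \<exists>x\<in>F. \<forall>j. dist ((T ^^ j) x) ((T ^^ j) y) \<le> \<epsilon>)"
proof -
  define S where "S = {x\<in>X. (T ^^ Suc k) x = x}"
  have cS: "compact S"
  proof -
    have "closed {x\<in>X. dist ((T ^^ Suc k) x) x = 0}"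
      using funpow_cont[OF assms(2,3), of "Suc k"] assms(1)
      by (intro continuous_closed_preimage_constant continuous_intros compact_imp_closed)
        (auto intro: continuous_on_dist continuous_on_id)
    then have "closed S" unfolding S_def by simp
    then show ?thesis using assms(1) compact_Int_closed[of X S] S_def
      by (simp add: Int_absorb1)
  qed
  have "\<exists>d>0. \<forall>y\<in>X. dist y x < d \<longrightarrow> (\<forall>j<Suc k. dist ((T ^^ j) x) ((T ^^ j) y) < \<epsilon>)"
    if "x \<in> X" for x
  proof -
    have "\<forall>j\<in>{..<Suc k}. eventually (\<lambda>y. dist ((T ^^ j) y) ((T ^^ j) x) < \<epsilon>) (at x within X)"
    proof
      fix j
      have "((T ^^ j) \<longlongrightarrow> (T ^^ j) x) (at x within X)"
        using funpow_cont[OF assms(2,3), of j] that by (simp add: continuous_on_def)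
      then show "eventually (\<lambda>y. dist ((T ^^ j) y) ((T ^^ j) x) < \<epsilon>) (at x within X)"
        using assms(4) tendstoD by blast
    qed
    then have "eventually (\<lambda>y. \<forall>j\<in>{..<Suc k}. dist ((T ^^ j) y) ((T ^^ j) x) < \<epsilon>) (at x within X)"
      by (simp add: eventually_ball_finite)
    then obtain d where d: "d > 0" "\<And>y. y \<in> X \<Longrightarrow> y \<noteq> x \<Longrightarrow> dist y x < d \<Longrightarrow>
        (\<forall>j\<in>{..<Suc k}. dist ((T ^^ j) y) ((T ^^ j) x) < \<epsilon>)"
      unfolding eventually_at by blast
    have "dist ((T ^^ j) x) ((T ^^ j) y) < \<epsilon>" if "y \<in> X" "dist y x < d" "j < Suc k" for y j
    proof (cases "y = x")
      case True then show ?thesis using assms(4) by simp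
    next
      case False then show ?thesis using d(2)[of y] that by (auto simp: dist_commute)
    qed
    then show ?thesis using d(1) by blast
  qed
  then obtain d where d: "\<And>x. x \<in> X \<Longrightarrow> d x > 0"
    "\<And>x y j. x \<in> X \<Longrightarrow> y \<in> X \<Longrightarrow> dist y x < d x \<Longrightarrow> j < Suc k \<Longrightarrow> dist ((T ^^ j) x) ((T ^^ j) y) < \<epsilon>"
    by metis
  have "S \<subseteq> (\<Union>x\<in>S. ball x (d x))"
    using d(1) S_def by auto
  then obtain F where F: "F \<subseteq> S" "finite F" "S \<subseteq> (\<Union>x\<in>F. ball x (d x))"
    using compactE_image[OF cS, of S "\<lambda>x. ball x (d x)"] by auto
  have "\<exists>x\<in>F. \<forall>j. dist ((T ^^ j) x) ((T ^^ j) y) \<le> \<epsilon>" if yS: "y \<in> S" for y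
  proof -
    obtain x where x: "x \<in> F" "dist x y < d x" using F(3) yS by auto
    have xS: "x \<in> S" using F(1) x by auto
    have "dist ((T ^^ j) x) ((T ^^ j) y) \<le> \<epsilon>" for j
    proof -
      have "(T ^^ j) x = (T ^^ (j mod Suc k)) x" using xS unfolding S_def by (intro funpow_mod) simp
      moreover have "(T ^^ j) y = (T ^^ (j mod Suc k)) y" using yS unfolding S_def by (intro funpow_mod) simp
      moreover have "dist ((T ^^ (j mod Suc k)) x) ((T ^^ (j mod Suc k)) y) < \<epsilon>"
        using d(2)[of x y "j mod Suc k"] xS yS x S_def by (auto simp: dist_commute)
      ultimately show ?thesis by simp
    qed
    then show ?thesis using x by blast
  qed
  then show ?thesis using F S_def by blast
qed

lemma exists_m:
  assumes "t > 0" "c > 0"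
  shows "\<exists>m\<ge>n. 2 powr (- t * real m) \<le> c"
proof -
  obtain m :: nat where m: "real m \<ge> max (real n) (- log 2 c / t)"
    using real_arch_simple by blast
  have "- log 2 c / t \<le> real m" using m by simp
  then have "(- log 2 c) / t \<le> real m" by simp
  then have "- log 2 c \<le> real m * t" using pos_divide_le_eq[OF assms(1)] by blast
  then have "- log 2 c \<le> t * real m" by (simp add: mult.commute)
  then have "- t * real m \<le> log 2 c" by simp
  then have "2 powr (- t * real m) \<le> 2 powr (log 2 c)" by simp
  also have "\<dots> = c" using assms(2) by simp
  finally show ?thesis using m by (intro exI[of _ m]) auto
qed

lemma C_zero:
  fixes T :: "'a::metric_space \<Rightarrow> 'a" and X :: "'a set"
  assumes "compact X" and "continuous_on X T" and "T ` X \<subseteq> X" and "\<epsilon> > 0" and "t > 0"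
    and ne: "periodic_points T X \<noteq> {}"
  shows "bowen_C T X (periodic_points T X) t n \<epsilon> = 0"
proof -
  have "\<forall>k. \<exists>F. finite F \<and> F \<subseteq> {x\<in>X. (T ^^ Suc k) x = x} \<and>
     (\<forall>y\<in>{x\<in>X. (T ^^ Suc k) x = x}. \<exists>x\<in>F. \<forall>j. dist ((T ^^ j) x) ((T ^^ j) y) \<le> \<epsilon>)"
    using fix_cover[OF assms(1-4)] by blast
  from choice[OF this] obtain F where F0: "\<forall>k. finite (F k) \<and> F k \<subseteq> {x\<in>X. (T ^^ Suc k) x = x} \<and>
     (\<forall>y\<in>{x\<in>X. (T ^^ Suc k) x = x}. \<exists>x\<in>F k. \<forall>j. dist ((T ^^ j) x) ((T ^^ j) y) \<le> \<epsilon>)"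
    by blast
  have F: "\<And>k. finite (F k)" "\<And>k. F k \<subseteq> {x\<in>X. (T ^^ Suc k) x = x}"
    "\<And>k y. y \<in> X \<Longrightarrow> (T ^^ Suc k) y = y \<Longrightarrow> \<exists>x\<in>F k. \<forall>j. dist ((T ^^ j) x) ((T ^^ j) y) \<le> \<epsilon>"
    using F0 by blast+
  define C where "C = (\<Union>k. F k)"
  have cC: "countable C" unfolding C_def using F(1) by (simp add: countable_finite)
  have CX: "C \<subseteq> X" unfolding C_def using F(2) by blast
  have near: "\<exists>x\<in>C. \<forall>j. dist ((T ^^ j) x) ((T ^^ j) y) \<le> \<epsilon>" if yP: "y \<in> periodic_points T X" for y
  proof -
    obtain p where p: "y \<in> X" "p > 0" "(T ^^ p) y = y" using yP unfolding periodic_points_def by blast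
    then have "(T ^^ Suc (p - 1)) y = y" by simp
    then show ?thesis using F(3)[OF p(1)] unfolding C_def by blast
  qed
  have Cne: "C \<noteq> {}" using near ne by blast
  define xs where "xs = from_nat_into C"
  have xsC: "range xs = C" unfolding xs_def using Cne cC by simp
  show ?thesis
  proof (rule antisym[OF ennreal_le_epsilon], goal_cases)
    case (1 \<eta>)
    have "\<forall>i. \<exists>m\<ge>n. 2 powr (- t * real m) \<le> \<eta> * (1/2) ^ Suc i"
    proof
      fix i
      have "\<eta> * (1/2) ^ Suc i > 0" using 1 by simp
      then show "\<exists>m\<ge>n. 2 powr (- t * real m) \<le> \<eta> * (1/2) ^ Suc i"
        by (rule exists_m[OF assms(5)])
    qed
    from choice[OF this] obtain ms where ms0: "\<forall>i. ms i \<ge> n \<and> 2 powr (- t * real (ms i)) \<le> \<eta> * (1/2) ^ Suc i"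
      by blast
    have ms: "\<And>i. ms i \<ge> n" "\<And>i. 2 powr (- t * real (ms i)) \<le> \<eta> * (1/2) ^ Suc i"
      using ms0 by blast+
    have cov: "periodic_points T X \<subseteq> (\<Union>i\<in>UNIV. bowen_ball T X (ms i) (xs i) \<epsilon>)"
    proof
      fix y assume y: "y \<in> periodic_points T X"
      then obtain x where x: "x \<in> C" "\<forall>j. dist ((T ^^ j) x) ((T ^^ j) y) \<le> \<epsilon>" using near by blast
      obtain i where "x = xs i" using x(1) xsC by (metis rangeE)
      moreover have "y \<in> X" using y unfolding periodic_points_def by blast
      ultimately show "y \<in> (\<Union>i\<in>UNIV. bowen_ball T X (ms i) (xs i) \<epsilon>)"
        using x(2) unfolding bowen_ball_def by blast
    qed
    have mem: "(UNIV, xs, ms) \<in> {(I, xs, ms). (I::nat set) \<subseteq> UNIV \<and> (\<forall>i\<in>I. xs i \<in> X \<and> ms i \<ge> n)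
                         \<and> periodic_points T X \<subseteq> (\<Union>i\<in>I. bowen_ball T X (ms i) (xs i) \<epsilon>)}"
      using cov ms(1) xsC CX by auto
    have "bowen_C T X (periodic_points T X) t n \<epsilon> \<le>
        (\<Sum>i. if i \<in> UNIV then ennreal (2 powr (- t * real (ms i))) else 0)"
      unfolding bowen_C_def by (rule INF_lower2[OF mem]) simp
    also have "\<dots> \<le> (\<Sum>i. ennreal (\<eta> * (1/2) ^ Suc i))"
      proof (intro suminf_le summableI)
      fix i
      show "(if i \<in> UNIV then ennreal (2 powr (- t * real (ms i))) else 0) \<le> ennreal (\<eta> * (1/2) ^ Suc i)"
        using ms(2)[of i] by (simp only: if_True UNIV_I ennreal_leI)
    qed
    also have "\<dots> = ennreal \<eta>"
    proof (rule suminf_ennreal_eq)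
      show "(\<lambda>i. \<eta> * (1/2) ^ Suc i) sums \<eta>"
        using power_half_series[THEN sums_mult, of \<eta>] by simp
    qed (use 1 in simp)
    finally show ?case by simp
  qed simp
qed

lemma C_ge1:
  assumes "Z \<noteq> {}" "t \<le> 0"
  shows "bowen_C T X Z t n \<epsilon> \<ge> 1"
  unfolding bowen_C_def
proof (rule INF_greatest)
  fix c assume "c \<in> {(I, xs, ms). (I::nat set) \<subseteq> UNIV \<and> (\<forall>i\<in>I. xs i \<in> X \<and> ms i \<ge> n)
                         \<and> Z \<subseteq> (\<Union>i\<in>I. bowen_ball T X (ms i) (xs i) \<epsilon>)}"
  then obtain I xs ms where c: "c = (I, xs, ms)" and cov: "Z \<subseteq> (\<Union>i\<in>I. bowen_ball T X (ms i) (xs i) \<epsilon>)"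
    by auto
  then obtain i where i: "i \<in> I" using assms(1) by blast
  let ?f = "\<lambda>i. if i \<in> I then ennreal (2 powr (- t * real (ms i))) else 0"
  have "1 \<le> 2 powr (- t * real (ms i))" using assms(2) by (intro ge_one_powr_ge_zero) (auto simp: mult_nonpos_nonneg)
  then have "1 \<le> ?f i" using i by (simp add: ennreal_leI)
  also have "?f i \<le> (\<Sum>i. ?f i)"
    using ennreal_suminf_lessD[of ?f "?f i" i] by (meson not_le order.irrefl)
  finally show "1 \<le> (case c of (I, xs, ms) \<Rightarrow> \<Sum>i. if i \<in> I then ennreal (2 powr (- t * real (ms i))) else 0)"
    using c by simp
qed

theorem mainTheorem12:
  fixes T :: "'a::metric_space \<Rightarrow> 'a" and X :: "'a set"
  assumes "compact X" and "continuous_on X T" and "T ` X \<subseteq> X"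
  shows "periodic_points T X = {} \<or> htop T X (periodic_points T X) = 0"
proof (cases "periodic_points T X = {}")
  case True then show ?thesis by simp
next
  case False
  then have ne: "periodic_points T X \<noteq> {}" .
  have h0: "bowen_h T X (periodic_points T X) \<epsilon> = 0" if "\<epsilon> > 0" for \<epsilon>
  proof -
    have S: "{ereal t | t. (\<lambda>n. bowen_C T X (periodic_points T X) t n \<epsilon>) \<longlonglongrightarrow> 0}
        = {ereal t | t. t > 0}"
    proof -
      have "((\<lambda>n. bowen_C T X (periodic_points T X) t n \<epsilon>) \<longlonglongrightarrow> 0) \<longleftrightarrow> t > 0" for t
      proof
        assume lim: "(\<lambda>n. bowen_C T X (periodic_points T X) t n \<epsilon>) \<longlonglongrightarrow> 0"
        show "t > 0"
        proof (rule ccontr)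
          assume "\<not> t > 0"
          then have "\<And>n. bowen_C T X (periodic_points T X) t n \<epsilon> \<ge> 1" by (intro C_ge1 ne) simp
          moreover have "eventually (\<lambda>n. bowen_C T X (periodic_points T X) t n \<epsilon> < 1) sequentially"
            using order_tendstoD(2)[OF lim] by simp
          ultimately show False
            by (metis (mono_tags, lifting) eventually_sequentially le_refl not_le)
        qed
      next
        assume "t > 0"
        then show "(\<lambda>n. bowen_C T X (periodic_points T X) t n \<epsilon>) \<longlonglongrightarrow> 0"
          using C_zero[OF assms that _ ne] by simp
      qed
      then show ?thesis by auto
    qed
    have "Inf {ereal t | t. t > 0} = 0"
    proof (rule antisym)
      show "0 \<le> Inf {ereal t | t. t > 0}" by (rule Inf_greatest) auto
      show "Inf {ereal t | t. t > 0} \<le> 0"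
      proof (rule ereal_le_epsilon2)
        fix e :: real assume "e > 0"
        then show "Inf {ereal t | t. t > 0} \<le> 0 + ereal e" by (intro Inf_lower) auto
      qed
    qed
    then show ?thesis unfolding bowen_h_def S by simp
  qed
  have "eventually (\<lambda>\<epsilon>. bowen_h T X (periodic_points T X) \<epsilon> = 0) (at_right (0::real))"
    unfolding eventually_at_right_field using h0 by (intro exI[of _ 1]) auto
  then have "((\<lambda>\<epsilon>. bowen_h T X (periodic_points T X) \<epsilon>) \<longlongrightarrow> 0) (at_right 0)"
    by (rule tendsto_eventually)
  then have "htop T X (periodic_points T X) = 0"
    unfolding htop_def by (intro tendsto_Lim) auto
  then show ?thesis by simp
qed

end
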